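(* Let $H$ be a group and $\Delta$ an angled $H$-graph with finitely many $H$-orbits of cells. Let $\Delta_1,\dots,\Delta_\ell$ be representatives of the $H$-orbits of connected components of $\Delta$, and let $H_i$ be the stabilizer of $\Delta_i$. If $\kappa(H_i,\Delta_i)\le\pi\cdot|H_i|^{-1}$ for $1\le i\le\ell$, then $\kappa(H,\Delta)\le\kappa(H_i,\Delta_i)$ for $1\le i\le\ell$.
   Context: An angled $K$-graph is a graph $\Gamma$ with a $K$-action (without inversions) and a $K$-invariant map $\measuredangle$ from edges to $\mathbb R$. For a group $K$, $|K|^{-1}=1/|K|$ if $K$ is finite and $0$ otherwise. For a cocompact angled $K$-graph, $\kappa(K,\Gamma)=2\pi|K|^{-1}-\sum_{v}\pi|K_v|^{-1}+\sum_{e}(\pi-\measuredangle(e))|K_e|^{-1}$, with sums over representatives of the $K$-orbits of vertices and of edges and $K_v,K_e$ their stabilizers. *)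

theory Defs
  imports "HOL-Algebra.Group_Action" Complex_Main
begin

definition inv_card :: "'a set \<Rightarrow> real" where
  "inv_card S = (if finite S then 1 / real (card S) else 0)"

text \<open>A K-action without inversions is encoded by
  actions on vertices and on edges that commute with src and tgt (an invariant
  orientation).\<close>
definition angled_graph ::
  "('g, 'm) monoid_scheme \<Rightarrow> 'v set \<Rightarrow> 'e set \<Rightarrow> ('e \<Rightarrow> 'v) \<Rightarrow> ('e \<Rightarrow> 'v)
   \<Rightarrow> ('g \<Rightarrow> 'v \<Rightarrow> 'v) \<Rightarrow> ('g \<Rightarrow> 'e \<Rightarrow> 'e) \<Rightarrow> ('e \<Rightarrow> real) \<Rightarrow> bool" where
  "angled_graph K V E src tgt actV actE ang \<longleftrightarrow>
     group K \<and> group_action K V actV \<and> group_action K E actE \<and>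
     src \<in> E \<rightarrow> V \<and> tgt \<in> E \<rightarrow> V \<and>
     (\<forall>g\<in>carrier K. \<forall>e\<in>E.
        src (actE g e) = actV g (src e) \<and> tgt (actE g e) = actV g (tgt e) \<and>
        ang (actE g e) = ang e)"

definition cocompact ::
  "('g, 'm) monoid_scheme \<Rightarrow> 'v set \<Rightarrow> 'e set
   \<Rightarrow> ('g \<Rightarrow> 'v \<Rightarrow> 'v) \<Rightarrow> ('g \<Rightarrow> 'e \<Rightarrow> 'e) \<Rightarrow> bool" where
  "cocompact K V E actV actE \<longleftrightarrow> finite (orbits K V actV) \<and> finite (orbits K E actE)"

definition kappa ::
  "('g, 'm) monoid_scheme \<Rightarrow> 'v set \<Rightarrow> 'e set
   \<Rightarrow> ('g \<Rightarrow> 'v \<Rightarrow> 'v) \<Rightarrow> ('g \<Rightarrow> 'e \<Rightarrow> 'e) \<Rightarrow> ('e \<Rightarrow> real) \<Rightarrow> real" where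
  "kappa K V E actV actE ang =
     2 * pi * inv_card (carrier K)
     - (\<Sum>Orb\<in>orbits K V actV. pi * inv_card (stabilizer K actV (SOME v. v \<in> Orb)))
     + (\<Sum>Orb\<in>orbits K E actE. (pi - ang (SOME e. e \<in> Orb))
                                * inv_card (stabilizer K actE (SOME e. e \<in> Orb)))"

definition conn_rel :: "'v set \<Rightarrow> 'e set \<Rightarrow> ('e \<Rightarrow> 'v) \<Rightarrow> ('e \<Rightarrow> 'v) \<Rightarrow> ('v \<times> 'v) set" where
  "conn_rel V E src tgt =
     (Id_on V \<union> {(src e, tgt e) | e. e \<in> E} \<union> {(tgt e, src e) | e. e \<in> E})\<^sup>*"

definition components :: "'v set \<Rightarrow> 'e set \<Rightarrow> ('e \<Rightarrow> 'v) \<Rightarrow> ('e \<Rightarrow> 'v) \<Rightarrow> 'v set set" where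
  "components V E src tgt = {conn_rel V E src tgt `` {v} | v. v \<in> V}"

definition comp_edges :: "'e set \<Rightarrow> ('e \<Rightarrow> 'v) \<Rightarrow> 'v set \<Rightarrow> 'e set" where
  "comp_edges E src C = {e \<in> E. src e \<in> C}"

definition set_act :: "('g \<Rightarrow> 'v \<Rightarrow> 'v) \<Rightarrow> 'g \<Rightarrow> 'v set \<Rightarrow> 'v set" where
  "set_act actV g C = actV g ` C"

definition comp_kappa ::
  "('g, 'm) monoid_scheme \<Rightarrow> 'e set \<Rightarrow> ('e \<Rightarrow> 'v)
   \<Rightarrow> ('g \<Rightarrow> 'v \<Rightarrow> 'v) \<Rightarrow> ('g \<Rightarrow> 'e \<Rightarrow> 'e) \<Rightarrow> ('e \<Rightarrow> real) \<Rightarrow> 'v set \<Rightarrow> real" where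
  "comp_kappa K E src actV actE ang C =
     kappa (K\<lparr>carrier := stabilizer K (set_act actV) C\<rparr>) C (comp_edges E src C)
       (\<lambda>g. restrict (actV g) C) (\<lambda>g. restrict (actE g) (comp_edges E src C)) ang"

end

theory Submission
  imports Defs
begin

lemma (in group_action) orbit_eq:
  assumes "x \<in> E" "y \<in> orbit G \<phi> x"
  shows "orbit G \<phi> y = orbit G \<phi> x"
proof -
  have yE: "y \<in> E" using assms element_image by (auto simp: orbit_def)
  have sub: "\<And>z. z \<in> orbit G \<phi> x \<Longrightarrow> z \<in> E" using assms element_image by (auto simp: orbit_def)
  have sub2: "\<And>z. z \<in> orbit G \<phi> y \<Longrightarrow> z \<in> E" using yE element_image by (auto simp: orbit_def)
  have xy: "x \<in> orbit G \<phi> y" using orbit_sym assms yE by blast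
  show ?thesis
  proof
    show "orbit G \<phi> y \<subseteq> orbit G \<phi> x"
      using orbit_trans[OF assms(1) yE] sub2 assms by blast
    show "orbit G \<phi> x \<subseteq> orbit G \<phi> y"
      using orbit_trans[OF yE assms(1)] sub xy by blast
  qed
qed

lemma (in group_action) stab_conj:
  assumes x: "x \<in> E" and h: "h \<in> carrier G"
  shows "inv_card (stabilizer G \<phi> (\<phi> h x)) = inv_card (stabilizer G \<phi> x)"
proof -
  interpret group G using group_hom group_hom.axioms(1) by auto
  have hx: "\<phi> h x \<in> E" using element_image x h by blast
  have bck: "\<phi> (inv h) (\<phi> h x) = x" using orbit_sym_aux x h by blast
  have "bij_betw (\<lambda>g. h \<otimes> g \<otimes> inv h) (stabilizer G \<phi> x) (stabilizer G \<phi> (\<phi> h x))"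
  proof (rule bij_betw_byWitness[where f'="\<lambda>k. inv h \<otimes> k \<otimes> h"])
    show "\<forall>a\<in>stabilizer G \<phi> x. inv h \<otimes> (h \<otimes> a \<otimes> inv h) \<otimes> h = a"
    proof
      fix a assume "a \<in> stabilizer G \<phi> x"
      then have a: "a \<in> carrier G" by (simp add: stabilizer_def)
      have "inv h \<otimes> (h \<otimes> a) = a" using a h by (simp add: m_assoc[symmetric])
      then show "inv h \<otimes> (h \<otimes> a \<otimes> inv h) \<otimes> h = a" using a h by (simp add: m_assoc)
    qed
    show "\<forall>a\<in>stabilizer G \<phi> (\<phi> h x). h \<otimes> (inv h \<otimes> a \<otimes> h) \<otimes> inv h = a"
    proof
      fix a assume "a \<in> stabilizer G \<phi> (\<phi> h x)"
      then have a: "a \<in> carrier G" by (simp add: stabilizer_def)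
      have "h \<otimes> (inv h \<otimes> a) = a" using a h by (simp add: m_assoc[symmetric])
      then show "h \<otimes> (inv h \<otimes> a \<otimes> h) \<otimes> inv h = a" using a h by (simp add: m_assoc)
    qed
    show "(\<lambda>g. h \<otimes> g \<otimes> inv h) ` stabilizer G \<phi> x \<subseteq> stabilizer G \<phi> (\<phi> h x)"
    proof
      fix k assume "k \<in> (\<lambda>g. h \<otimes> g \<otimes> inv h) ` stabilizer G \<phi> x"
      then obtain g where g: "g \<in> carrier G" "\<phi> g x = x" and k: "k = h \<otimes> g \<otimes> inv h"
        by (auto simp: stabilizer_def)
      have "\<phi> k (\<phi> h x) = \<phi> h (\<phi> g (\<phi> (inv h) (\<phi> h x)))"
        using k g h hx x by (simp add: composition_rule bck)
      also have "\<dots> = \<phi> h x" using bck g by simp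
      finally show "k \<in> stabilizer G \<phi> (\<phi> h x)" using k g h by (auto simp: stabilizer_def)
    qed
    show "(\<lambda>k. inv h \<otimes> k \<otimes> h) ` stabilizer G \<phi> (\<phi> h x) \<subseteq> stabilizer G \<phi> x"
    proof
      fix k assume "k \<in> (\<lambda>k. inv h \<otimes> k \<otimes> h) ` stabilizer G \<phi> (\<phi> h x)"
      then obtain g where g: "g \<in> carrier G" "\<phi> g (\<phi> h x) = \<phi> h x" and k: "k = inv h \<otimes> g \<otimes> h"
        by (auto simp: stabilizer_def)
      have "\<phi> k x = \<phi> (inv h) (\<phi> g (\<phi> h x))"
        using k g h hx x by (simp add: composition_rule)
      also have "\<dots> = x" using bck g by simp
      finally show "k \<in> stabilizer G \<phi> x" using k g h by (auto simp: stabilizer_def)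
    qed
  qed
  then show ?thesis unfolding inv_card_def
    using bij_betw_finite bij_betw_same_card by metis
qed


lemma finite_reps:
  fixes G :: "('g,'m) monoid_scheme" and X :: "'x set" and P :: "'x \<Rightarrow> 'c"
  assumes act: "group_action G X \<phi>"
    and fin: "finite (orbits G X \<phi>)"
    and eqv: "\<And>g x. g \<in> carrier G \<Longrightarrow> x \<in> X \<Longrightarrow> P (\<phi> g x) = \<psi> g (P x)"
    and Rrep: "\<And>x. x \<in> X \<Longrightarrow> \<exists>!C. C \<in> R \<and> C \<in> orbit G \<psi> (P x)"
    and Rsub: "R \<subseteq> P ` X"
  shows "finite R"
proof -
  interpret group_action G X \<phi> by (rule act)
  define rep where "rep Ob = (SOME x. x \<in> Ob)" for Ob :: "'x set"
  define f where "f Ob = (THE C. C \<in> R \<and> C \<in> orbit G \<psi> (P (rep Ob)))" for Ob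
  have "R \<subseteq> f ` orbits G X \<phi>"
  proof
    fix C assume C: "C \<in> R"
    then obtain x where x: "x \<in> X" "C = P x" using Rsub by auto
    define Ob where "Ob = orbit G \<phi> x"
    have Ob: "Ob \<in> orbits G X \<phi>" using x unfolding Ob_def orbits_def by blast
    have "x \<in> Ob" using orbit_refl x unfolding Ob_def by blast
    then have s: "rep Ob \<in> Ob" unfolding rep_def by (rule someI)
    then obtain g where g: "g \<in> carrier G" "rep Ob = \<phi> g x" unfolding Ob_def orbit_def by blast
    have ig: "inv\<^bsub>G\<^esub> g \<in> carrier G" using g group_hom group_hom.axioms(1) group.inv_closed by metis
    have gx: "\<phi> g x \<in> X" using g x element_image by blast
    have "\<phi> (inv\<^bsub>G\<^esub> g) (\<phi> g x) = x" using orbit_sym_aux g x by blast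
    then have "\<psi> (inv\<^bsub>G\<^esub> g) (P (\<phi> g x)) = C" using eqv[OF ig gx] x by simp
    then have "C \<in> orbit G \<psi> (P (rep Ob))" using g ig unfolding orbit_def by auto
    moreover have "rep Ob \<in> X" using g gx by simp
    ultimately have "f Ob = C" unfolding f_def using Rrep C by (metis (no_types, lifting) the_equality)
    then show "C \<in> f ` orbits G X \<phi>" using Ob by blast
  qed
  then show ?thesis using fin finite_surj by blast
qed

lemma decomp:
  fixes G :: "('g,'m) monoid_scheme" and X :: "'x set" and P :: "'x \<Rightarrow> 'c"
    and \<psi> :: "'g \<Rightarrow> 'c \<Rightarrow> 'c" and W :: "'x \<Rightarrow> real"
  assumes act: "group_action G X \<phi>"
    and fin: "finite (orbits G X \<phi>)"
    and eqv: "\<And>g x. g \<in> carrier G \<Longrightarrow> x \<in> X \<Longrightarrow> P (\<phi> g x) = \<psi> g (P x)"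
    and Rrep: "\<And>x. x \<in> X \<Longrightarrow> \<exists>!C. C \<in> R \<and> C \<in> orbit G \<psi> (P x)"
    and finR: "finite R"
    and Winv: "\<And>g x. g \<in> carrier G \<Longrightarrow> x \<in> X \<Longrightarrow> W (\<phi> g x) = W x"
  shows "(\<Sum>Ob\<in>orbits G X \<phi>. W (SOME x. x \<in> Ob) * inv_card (stabilizer G \<phi> (SOME x. x \<in> Ob)))
   = (\<Sum>C\<in>R. \<Sum>Ob\<in>orbits (G\<lparr>carrier := stabilizer G \<psi> C\<rparr>) {x\<in>X. P x = C}
                  (\<lambda>g. restrict (\<phi> g) {x\<in>X. P x = C}).
        W (SOME x. x \<in> Ob) * inv_card (stabilizer (G\<lparr>carrier := stabilizer G \<psi> C\<rparr>)
                  (\<lambda>g. restrict (\<phi> g) {x\<in>X. P x = C}) (SOME x. x \<in> Ob)))"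
proof -
  interpret group_action G X \<phi> by (rule act)
  define rep where "rep Ob = (SOME x. x \<in> Ob)" for Ob :: "'x set"
  define t where "t x = W x * inv_card (stabilizer G \<phi> x)" for x
  define XC where "XC C = {x\<in>X. P x = C}" for C
  define S where "S C = {Ob \<in> orbits G X \<phi>. Ob \<inter> XC C \<noteq> {}}" for C
  have t_orb: "t y = t x" if xy: "x \<in> X" "y \<in> orbit G \<phi> x" for x y
  proof -
    obtain g where g: "g \<in> carrier G" "y = \<phi> g x" using xy by (auto simp: orbit_def)
    show ?thesis unfolding t_def using g xy stab_conj Winv by simp
  qed
  have orbX: "y \<in> X" if "x \<in> X" "y \<in> orbit G \<phi> x" for x y
    using that element_image by (auto simp: orbit_def)
  have t_rep: "t (rep Ob) = t y" if oy: "Ob \<in> orbits G X \<phi>" "y \<in> Ob" for Ob y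
  proof -
    obtain x where x: "x \<in> X" "Ob = orbit G \<phi> x" using oy by (auto simp: orbits_def)
    have "(rep Ob) \<in> Ob" using oy unfolding rep_def by (metis someI)
    then have "t (rep Ob) = t x" using x(2) by (intro t_orb[OF x(1)]) simp
    moreover have "t y = t x" using x(2) oy(2) by (intro t_orb[OF x(1)]) simp
    ultimately show ?thesis by simp
  qed
  have cover: "orbits G X \<phi> = \<Union> (S ` R)"
  proof
    show "\<Union> (S ` R) \<subseteq> orbits G X \<phi>" by (auto simp: S_def)
    show "orbits G X \<phi> \<subseteq> \<Union> (S ` R)"
    proof
      fix Ob assume Ob: "Ob \<in> orbits G X \<phi>"
      then obtain x where x: "x \<in> X" "Ob = orbit G \<phi> x" by (auto simp: orbits_def)
      then obtain C where C: "C \<in> R" "C \<in> orbit G \<psi> (P x)" using Rrep by blast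
      then obtain g where g: "g \<in> carrier G" "C = \<psi> g (P x)" by (auto simp: orbit_def)
      have "\<phi> g x \<in> Ob" using x g by (auto simp: orbit_def)
      moreover have "\<phi> g x \<in> XC C" using g x eqv element_image by (auto simp: XC_def)
      ultimately show "Ob \<in> \<Union> (S ` R)" using Ob C by (auto simp: S_def)
    qed
  qed
  have disj: "S C1 \<inter> S C2 = {}" if cc: "C1 \<in> R" "C2 \<in> R" "C1 \<noteq> C2" for C1 C2
  proof (rule ccontr)
    assume "S C1 \<inter> S C2 \<noteq> {}"
    then obtain Ob y1 y2 where Ob: "Ob \<in> orbits G X \<phi>" "y1 \<in> Ob" "P y1 = C1" "y2 \<in> Ob" "P y2 = C2"
      by (auto simp: S_def XC_def)
    then obtain x where x: "x \<in> X" "Ob = orbit G \<phi> x" by (auto simp: orbits_def)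
    obtain g1 where g1: "g1 \<in> carrier G" "y1 = \<phi> g1 x" using Ob x by (auto simp: orbit_def)
    obtain g2 where g2: "g2 \<in> carrier G" "y2 = \<phi> g2 x" using Ob x by (auto simp: orbit_def)
    have "C1 \<in> orbit G \<psi> (P x)" using g1 Ob x eqv by (auto simp: orbit_def)
    moreover have "C2 \<in> orbit G \<psi> (P x)" using g2 Ob x eqv by (auto simp: orbit_def)
    ultimately show False using Rrep[OF x(1)] cc by blast
  qed
  have finS: "finite (S C)" for C using fin by (auto simp: S_def)
  have step1: "(\<Sum>Ob\<in>orbits G X \<phi>. t (rep Ob)) = (\<Sum>C\<in>R. \<Sum>Ob\<in>S C. t (rep Ob))"
    unfolding cover by (rule sum.UNION_disjoint[OF finR]) (use finS disj in auto)
  have step2: "(\<Sum>Ob\<in>orbits (G\<lparr>carrier := stabilizer G \<psi> C\<rparr>) (XC C) (\<lambda>g. restrict (\<phi> g) (XC C)).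
        W (rep Ob) * inv_card (stabilizer (G\<lparr>carrier := stabilizer G \<psi> C\<rparr>)
                  (\<lambda>g. restrict (\<phi> g) (XC C)) (rep Ob)))
      = (\<Sum>Ob\<in>S C. t (rep Ob))" if C: "C \<in> R" for C
  proof -
    let ?G = "G\<lparr>carrier := stabilizer G \<psi> C\<rparr>"
    let ?f = "\<lambda>g. restrict (\<phi> g) (XC C)"
    have orbC: "orbit ?G ?f x = orbit G \<phi> x \<inter> XC C" if x: "x \<in> XC C" for x
    proof -
      have xX: "x \<in> X" and Px: "P x = C" using x by (auto simp: XC_def)
      show ?thesis
        unfolding orbit_def stabilizer_def using x xX Px eqv element_image
        by (auto simp: XC_def)
    qed
    have stabC: "stabilizer ?G ?f x = stabilizer G \<phi> x" if x: "x \<in> XC C" for x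
    proof -
      have xX: "x \<in> X" and Px: "P x = C" using x by (auto simp: XC_def)
      show ?thesis
        unfolding stabilizer_def using x xX Px eqv by auto (metis eqv)
    qed
    have img: "orbits ?G (XC C) ?f = (\<lambda>Ob. Ob \<inter> XC C) ` S C"
    proof
      show "orbits ?G (XC C) ?f \<subseteq> (\<lambda>Ob. Ob \<inter> XC C) ` S C"
      proof
        fix Ob' assume "Ob' \<in> orbits ?G (XC C) ?f"
        then obtain x where x: "x \<in> XC C" "Ob' = orbit ?G ?f x" by (auto simp: orbits_def)
        have xX: "x \<in> X" using x by (auto simp: XC_def)
        have "orbit G \<phi> x \<in> S C" using x xX orbit_refl by (auto simp: S_def orbits_def)
        then show "Ob' \<in> (\<lambda>Ob. Ob \<inter> XC C) ` S C" using orbC x by auto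
      qed
      show "(\<lambda>Ob. Ob \<inter> XC C) ` S C \<subseteq> orbits ?G (XC C) ?f"
      proof
        fix Ob' assume "Ob' \<in> (\<lambda>Ob. Ob \<inter> XC C) ` S C"
        then obtain Ob y where Ob: "Ob \<in> orbits G X \<phi>" "y \<in> Ob" "y \<in> XC C" "Ob' = Ob \<inter> XC C"
          by (auto simp: S_def)
        then obtain x where x: "x \<in> X" "Ob = orbit G \<phi> x" by (auto simp: orbits_def)
        have "Ob = orbit G \<phi> y" using orbit_eq x Ob by blast
        then have "Ob' = orbit ?G ?f y" using orbC Ob by auto
        then show "Ob' \<in> orbits ?G (XC C) ?f" using Ob by (auto simp: orbits_def)
      qed
    qed
    have inj: "inj_on (\<lambda>Ob. Ob \<inter> XC C) (S C)"
    proof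
      fix O1 O2 assume O1: "O1 \<in> S C" and O2: "O2 \<in> S C" and eq: "O1 \<inter> XC C = O2 \<inter> XC C"
      then have "O1 \<inter> O2 \<noteq> {}" by (auto simp: S_def)
      then show "O1 = O2" using disjoint_union O1 O2 by (auto simp: S_def)
    qed
    have "(\<Sum>Ob\<in>orbits ?G (XC C) ?f. W (rep Ob) * inv_card (stabilizer ?G ?f (rep Ob)))
        = (\<Sum>Ob\<in>S C. W (rep (Ob \<inter> XC C)) * inv_card (stabilizer ?G ?f (rep (Ob \<inter> XC C))))"
      unfolding img by (simp add: sum.reindex[OF inj])
    also have "\<dots> = (\<Sum>Ob\<in>S C. t (rep Ob))"
    proof (rule sum.cong[OF refl])
      fix Ob assume Ob: "Ob \<in> S C"
      then have "Ob \<inter> XC C \<noteq> {}" by (auto simp: S_def)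
      then have s: "(rep (Ob \<inter> XC C)) \<in> Ob \<inter> XC C" unfolding rep_def by (metis ex_in_conv someI)
      have "W (rep (Ob \<inter> XC C)) * inv_card (stabilizer ?G ?f (rep (Ob \<inter> XC C)))
           = t (rep (Ob \<inter> XC C))" unfolding t_def using stabC s by simp
      also have "\<dots> = t (rep Ob)" using t_rep Ob s by (auto simp: S_def)
      finally show "W (rep (Ob \<inter> XC C)) * inv_card (stabilizer ?G ?f (rep (Ob \<inter> XC C)))
           = t (rep Ob)" .
    qed
    finally show ?thesis .
  qed
  show ?thesis
    using step1 step2 unfolding t_def XC_def rep_def by simp
qed


lemma conn_equiv: "equiv UNIV (conn_rel V E src tgt)"
proof -
  let ?B = "Id_on V \<union> {(src e, tgt e) | e. e \<in> E} \<union> {(tgt e, src e) | e. e \<in> E}"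
  have "sym ?B" unfolding sym_def Id_on_def by auto
  then have "sym (?B\<^sup>*)" by (rule sym_rtrancl)
  then show ?thesis unfolding conn_rel_def equiv_def
    by (simp add: refl_rtrancl trans_rtrancl)
qed

lemma conn_class_eq: "(conn_rel V E src tgt `` {a} = conn_rel V E src tgt `` {b})
   \<longleftrightarrow> (a, b) \<in> conn_rel V E src tgt"
  using equiv_class_eq_iff[OF conn_equiv[of V E src tgt], of a b] by auto

lemma conn_sym: "(a, b) \<in> conn_rel V E src tgt \<Longrightarrow> (b, a) \<in> conn_rel V E src tgt"
  using conn_equiv[of V E src tgt] unfolding equiv_def sym_def by blast

lemma conn_V:
  assumes st: "src \<in> E \<rightarrow> V" "tgt \<in> E \<rightarrow> V"
    and ab: "(a, b) \<in> conn_rel V E src tgt" and a: "a \<in> V"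
  shows "b \<in> V"
  using ab a unfolding conn_rel_def
proof (induction rule: rtrancl_induct)
  case base then show ?case by simp
next
  case (step y z)
  then show ?case using st unfolding Id_on_def by auto
qed

lemma conn_act:
  assumes ag: "angled_graph H V E src tgt actV actE ang" and g: "g \<in> carrier H"
    and ab: "(a, b) \<in> conn_rel V E src tgt"
  shows "(actV g a, actV g b) \<in> conn_rel V E src tgt"
proof -
  let ?B = "Id_on V \<union> {(src e, tgt e) | e. e \<in> E} \<union> {(tgt e, src e) | e. e \<in> E}"
  interpret group_action H E actE using ag unfolding angled_graph_def by blast
  have inv: "\<And>e. e \<in> E \<Longrightarrow> src (actE g e) = actV g (src e) \<and> tgt (actE g e) = actV g (tgt e)"
    using ag g unfolding angled_graph_def by simp
  have stepB: "(actV g y, actV g z) \<in> ?B\<^sup>*" if yz: "(y, z) \<in> ?B" for y z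
  proof -
    consider "y = z" | e where "e \<in> E" "y = src e" "z = tgt e" | e where "e \<in> E" "y = tgt e" "z = src e"
      using yz unfolding Id_on_def by blast
    then show ?thesis
    proof cases
      case 1 then show ?thesis by simp
    next
      case 2
      have "actE g e \<in> E" using 2 g element_image by blast
      then have "(src (actE g e), tgt (actE g e)) \<in> ?B" by blast
      then show ?thesis using 2 inv by auto
    next
      case 3
      have "actE g e \<in> E" using 3 g element_image by blast
      then have "(tgt (actE g e), src (actE g e)) \<in> ?B" by blast
      then show ?thesis using 3 inv by auto
    qed
  qed
  show ?thesis using ab unfolding conn_rel_def
  proof (induction rule: rtrancl_induct)
    case base then show ?case by simp
  next
    case (step y z)
    have "(actV g y, actV g z) \<in> ?B\<^sup>*" using stepB step(2) .
    then show ?case using step(3) by (rule rtrancl_trans[rotated])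
  qed
qed

lemma conn_img:
  assumes ag: "angled_graph H V E src tgt actV actE ang" and g: "g \<in> carrier H" and v: "v \<in> V"
  shows "conn_rel V E src tgt `` {actV g v} = actV g ` (conn_rel V E src tgt `` {v})"
proof
  show "actV g ` (conn_rel V E src tgt `` {v}) \<subseteq> conn_rel V E src tgt `` {actV g v}"
    using conn_act[OF ag g] by blast
  show "conn_rel V E src tgt `` {actV g v} \<subseteq> actV g ` (conn_rel V E src tgt `` {v})"
  proof
    fix y assume "y \<in> conn_rel V E src tgt `` {actV g v}"
    then have y: "(actV g v, y) \<in> conn_rel V E src tgt" by simp
    interpret group_action H V actV using ag unfolding angled_graph_def by blast
    have grp: "group H" using ag unfolding angled_graph_def by blast
    have ig: "inv\<^bsub>H\<^esub> g \<in> carrier H" using g grp group.inv_closed by metis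
    have gv: "actV g v \<in> V" using g v element_image by blast
    have yV: "y \<in> V" using conn_V[OF _ _ y gv] ag unfolding angled_graph_def by blast
    have "(actV (inv\<^bsub>H\<^esub> g) (actV g v), actV (inv\<^bsub>H\<^esub> g) y) \<in> conn_rel V E src tgt"
      using conn_act[OF ag ig y] .
    moreover have "actV (inv\<^bsub>H\<^esub> g) (actV g v) = v" using orbit_sym_aux g v by blast
    moreover have "actV g (actV (inv\<^bsub>H\<^esub> g) y) = y"
      using orbit_sym_aux[OF ig yV refl] g grp group.inv_inv by metis
    ultimately show "y \<in> actV g ` (conn_rel V E src tgt `` {v})" by force
  qed
qed


lemma inv_card_nonneg: "inv_card S \<ge> 0"
  unfolding inv_card_def by simp

theorem lemma7p1:
  fixes H :: "('g, 'm) monoid_scheme"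
    and V :: "'v set" and E :: "'e set"
    and src tgt :: "'e \<Rightarrow> 'v"
    and actV :: "'g \<Rightarrow> 'v \<Rightarrow> 'v" and actE :: "'g \<Rightarrow> 'e \<Rightarrow> 'e"
    and ang :: "'e \<Rightarrow> real"
    and R :: "'v set set"
  assumes graph: "angled_graph H V E src tgt actV actE ang"
    and cocpt: "cocompact H V E actV actE"
    and R_sub: "R \<subseteq> components V E src tgt"
    and R_rep: "\<forall>Orb\<in>orbits H (components V E src tgt) (set_act actV). \<exists>!C. C \<in> R \<and> C \<in> Orb"
    and hyp: "\<forall>C\<in>R. comp_kappa H E src actV actE ang C
                 \<le> pi * inv_card (stabilizer H (set_act actV) C)"
  shows "\<forall>C\<in>R. kappa H V E actV actE ang \<le> comp_kappa H E src actV actE ang C"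
proof -
  let ?conn = "conn_rel V E src tgt"
  define PV where "PV v = ?conn `` {v}" for v
  define PE where "PE e = ?conn `` {src e}" for e
  define \<psi> where "\<psi> = set_act actV"
  have grp: "group H" and actVg: "group_action H V actV" and actEg: "group_action H E actE"
    and st: "src \<in> E \<rightarrow> V" "tgt \<in> E \<rightarrow> V"
    and einv: "\<And>g e. g \<in> carrier H \<Longrightarrow> e \<in> E \<Longrightarrow>
        src (actE g e) = actV g (src e) \<and> tgt (actE g e) = actV g (tgt e) \<and> ang (actE g e) = ang e"
    using graph unfolding angled_graph_def by simp_all
  have finV: "finite (orbits H V actV)" and finE: "finite (orbits H E actE)"
    using cocpt unfolding cocompact_def by simp_all
  have eqvV: "PV (actV g v) = \<psi> g (PV v)" if "g \<in> carrier H" "v \<in> V" for g v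
    unfolding PV_def \<psi>_def set_act_def using conn_img[OF graph that] .
  have eqvE: "PE (actE g e) = \<psi> g (PE e)" if ge: "g \<in> carrier H" "e \<in> E" for g e
  proof -
    have "src e \<in> V" using st ge by auto
    then show ?thesis unfolding PE_def using einv[OF ge] eqvV[OF ge(1)] unfolding PV_def by simp
  qed
  have compsV: "PV v \<in> components V E src tgt" if "v \<in> V" for v
    unfolding PV_def components_def using that by blast
  have RrepV: "\<exists>!C. C \<in> R \<and> C \<in> orbit H \<psi> (PV v)" if v: "v \<in> V" for v
  proof -
    have "orbit H \<psi> (PV v) \<in> orbits H (components V E src tgt) (set_act actV)"
      unfolding orbits_def \<psi>_def using compsV[OF v] by blast
    then show ?thesis using R_rep by blast
  qed
  have RrepE: "\<exists>!C. C \<in> R \<and> C \<in> orbit H \<psi> (PE e)" if e: "e \<in> E" for e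
  proof -
    have "src e \<in> V" using st e by auto
    then show ?thesis using RrepV unfolding PE_def PV_def by blast
  qed
  have finR: "finite R"
    by (rule finite_reps[OF actVg finV eqvV RrepV]) (use R_sub in \<open>auto simp: components_def PV_def\<close>)
  have XV: "{v \<in> V. PV v = C} = C" if C: "C \<in> R" for C
  proof -
    obtain v0 where v0: "v0 \<in> V" "C = ?conn `` {v0}" using C R_sub unfolding components_def by blast
    have CV: "C \<subseteq> V" using v0 conn_V[OF st] by blast
    have "v \<in> C \<longleftrightarrow> PV v = C" for v
      unfolding PV_def v0(2) conn_class_eq[of V E src tgt v v0]
      using conn_sym[of v0 v V E src tgt] conn_sym[of v v0 V E src tgt] by auto
    then show ?thesis using CV by auto
  qed
  have XE: "{e \<in> E. PE e = C} = comp_edges E src C" if C: "C \<in> R" for C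
  proof -
    obtain v0 where v0: "v0 \<in> V" "C = ?conn `` {v0}" using C R_sub unfolding components_def by blast
    have "src e \<in> C \<longleftrightarrow> PE e = C" for e
      unfolding PE_def v0(2) conn_class_eq[of V E src tgt "src e" v0]
      using conn_sym[of v0 "src e" V E src tgt] conn_sym[of "src e" v0 V E src tgt] by auto
    then show ?thesis unfolding comp_edges_def by auto
  qed
  define K where "K C = H\<lparr>carrier := stabilizer H (set_act actV) C\<rparr>" for C
  define A where "A C = (\<Sum>Orb\<in>orbits (K C) C (\<lambda>g. restrict (actV g) C).
       pi * inv_card (stabilizer (K C) (\<lambda>g. restrict (actV g) C) (SOME v. v \<in> Orb)))" for C
  define B where "B C = (\<Sum>Orb\<in>orbits (K C) (comp_edges E src C) (\<lambda>g. restrict (actE g) (comp_edges E src C)).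
       (pi - ang (SOME e. e \<in> Orb)) * inv_card (stabilizer (K C) (\<lambda>g. restrict (actE g) (comp_edges E src C)) (SOME e. e \<in> Orb)))" for C
  have ck: "comp_kappa H E src actV actE ang C = 2 * pi * inv_card (stabilizer H (set_act actV) C) - A C + B C" for C
    unfolding comp_kappa_def kappa_def A_def B_def K_def by simp
  have sumV: "(\<Sum>Orb\<in>orbits H V actV. pi * inv_card (stabilizer H actV (SOME v. v \<in> Orb))) = (\<Sum>C\<in>R. A C)"
  proof -
    have "(\<Sum>Orb\<in>orbits H V actV. pi * inv_card (stabilizer H actV (SOME v. v \<in> Orb)))
      = (\<Sum>C\<in>R. \<Sum>Ob\<in>orbits (H\<lparr>carrier := stabilizer H \<psi> C\<rparr>) {x\<in>V. PV x = C}
                  (\<lambda>g. restrict (actV g) {x\<in>V. PV x = C}).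
        pi * inv_card (stabilizer (H\<lparr>carrier := stabilizer H \<psi> C\<rparr>)
                  (\<lambda>g. restrict (actV g) {x\<in>V. PV x = C}) (SOME x. x \<in> Ob)))"
      using decomp[OF actVg finV eqvV RrepV finR, of "\<lambda>_. pi"] by simp
    also have "\<dots> = (\<Sum>C\<in>R. A C)"
      by (rule sum.cong[OF refl]) (simp add: XV A_def K_def \<psi>_def)
    finally show ?thesis .
  qed
  have Winv: "\<And>g e. g \<in> carrier H \<Longrightarrow> e \<in> E \<Longrightarrow> pi - ang (actE g e) = pi - ang e"
    using einv by simp
  have sumE: "(\<Sum>Orb\<in>orbits H E actE. (pi - ang (SOME e. e \<in> Orb)) * inv_card (stabilizer H actE (SOME e. e \<in> Orb))) = (\<Sum>C\<in>R. B C)"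
  proof -
    have "(\<Sum>Orb\<in>orbits H E actE. (pi - ang (SOME e. e \<in> Orb)) * inv_card (stabilizer H actE (SOME e. e \<in> Orb)))
      = (\<Sum>C\<in>R. \<Sum>Ob\<in>orbits (H\<lparr>carrier := stabilizer H \<psi> C\<rparr>) {x\<in>E. PE x = C}
                  (\<lambda>g. restrict (actE g) {x\<in>E. PE x = C}).
        (pi - ang (SOME x. x \<in> Ob)) * inv_card (stabilizer (H\<lparr>carrier := stabilizer H \<psi> C\<rparr>)
                  (\<lambda>g. restrict (actE g) {x\<in>E. PE x = C}) (SOME x. x \<in> Ob)))"
      by (rule decomp[OF actEg finE eqvE RrepE finR, of "\<lambda>e. pi - ang e"]) (simp_all add: Winv)
    also have "\<dots> = (\<Sum>C\<in>R. B C)"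
      by (rule sum.cong[OF refl]) (simp add: XE B_def K_def \<psi>_def)
    finally show ?thesis .
  qed
  have kH: "kappa H V E actV actE ang = 2 * pi * inv_card (carrier H) - (\<Sum>C\<in>R. A C) + (\<Sum>C\<in>R. B C)"
    unfolding kappa_def sumV sumE ..
  show ?thesis
  proof
    fix C0 assume C0: "C0 \<in> R"
    define s where "s C = inv_card (stabilizer H (set_act actV) C)" for C
    have negs: "B C - A C \<le> 0" if "C \<in> R" for C
    proof -
      have "2 * pi * s C - A C + B C \<le> pi * s C" using hyp that ck unfolding s_def by simp
      moreover have "s C \<ge> 0" unfolding s_def by (rule inv_card_nonneg)
      moreover have "pi * s C \<ge> 0" using \<open>s C \<ge> 0\<close> by simp
      ultimately show ?thesis by linarith
    qed
    have "(\<Sum>C\<in>R. B C - A C) = (B C0 - A C0) + (\<Sum>C\<in>R - {C0}. B C - A C)"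
      using finR C0 by (simp add: sum.remove)
    also have "\<dots> \<le> B C0 - A C0"
    proof -
      have "(\<Sum>C\<in>R - {C0}. B C - A C) \<le> 0" by (rule sum_nonpos) (use negs in auto)
      then show ?thesis by simp
    qed
    finally have sum_le: "(\<Sum>C\<in>R. B C) - (\<Sum>C\<in>R. A C) \<le> B C0 - A C0"
      by (simp add: sum_subtractf)
    have card_le: "inv_card (carrier H) \<le> s C0"
    proof (cases "finite (carrier H)")
      case True
      have sub: "stabilizer H (set_act actV) C0 \<subseteq> carrier H" unfolding stabilizer_def by blast
      have fs: "finite (stabilizer H (set_act actV) C0)" using True sub finite_subset by blast
      obtain v0 where v0: "v0 \<in> V" "C0 = ?conn `` {v0}" using C0 R_sub unfolding components_def by blast
      have CV: "C0 \<subseteq> V" using v0 conn_V[OF st] by blast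
      have "actV \<one>\<^bsub>H\<^esub> = (\<lambda>x\<in>V. x)" using group_action.id_eq_one[OF actVg] by simp
      then have "set_act actV \<one>\<^bsub>H\<^esub> C0 = C0" unfolding set_act_def using CV by auto
      then have "\<one>\<^bsub>H\<^esub> \<in> stabilizer H (set_act actV) C0"
        unfolding stabilizer_def using grp monoid.one_closed group.is_monoid by blast
      then have c1: "card (stabilizer H (set_act actV) C0) > 0" using fs card_gt_0_iff by blast
      have c2: "card (stabilizer H (set_act actV) C0) \<le> card (carrier H)"
        using card_mono[OF True sub] .
      have "1 / real (card (carrier H)) \<le> 1 / real (card (stabilizer H (set_act actV) C0))"
        by (rule divide_left_mono) (use c1 c2 in auto)
      then show ?thesis unfolding s_def inv_card_def using True fs by simp
    next
      case False
      then show ?thesis unfolding s_def inv_card_def by simp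
    qed
    have "kappa H V E actV actE ang \<le> 2 * pi * s C0 + (B C0 - A C0)"
    proof -
      have "2 * pi * inv_card (carrier H) \<le> 2 * pi * s C0"
        using card_le pi_gt_zero by (intro mult_left_mono) auto
      then show ?thesis using kH sum_le by linarith
    qed
    also have "\<dots> = comp_kappa H E src actV actE ang C0" using ck unfolding s_def by simp
    finally show "kappa H V E actV actE ang \<le> comp_kappa H E src actV actE ang C0" .
  qed
qed

end
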